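(* For any $s\ge0$ and $u,v\in\mathcal{A}^s(\mathbb{T}^n)$, $$S_s(uv)\le 2\sum_{m=0}^{[s]}\binom{[s]}{m}\big[S_{s-m}(u)S_m(v)+S_{s-m}(v)S_m(u)\big].$$
   Context: For $u\in C(\mathbb{T}^n)$, $\mathbb{T}^n=\mathbb{R}^n/2\pi\mathbb{Z}^n$, with Fourier coefficients $u_k$, $S_s(u)=\sum_{k\in\mathbb{Z}^n}(1+|k|)^s|u_k|$ where $|k|=\sum|k_j|$; $\mathcal{A}^s(\mathbb{T}^n)=\{u\in C(\mathbb{T}^n):S_s(u)<\infty\}$. $[s]$ denotes the integer part of $s$. *)

theory Defs
  imports "HOL-Analysis.Analysis"
begin

text \<open>Functions on the torus T^n = R^n / 2pi Z^n, represented as 2pi-periodic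
  functions on R^n (dimension n = CARD('n)).\<close>

definition torus_continuous :: "(real^'n \<Rightarrow> complex) \<Rightarrow> bool" where
  "torus_continuous u \<longleftrightarrow> continuous_on UNIV u \<and>
     (\<forall>x i. u (x + (2 * pi) *\<^sub>R axis i 1) = u x)"

definition fourier_coeff :: "(real^'n \<Rightarrow> complex) \<Rightarrow> int^'n \<Rightarrow> complex" where
  "fourier_coeff u k =
     integral (cbox 0 (\<chi> i. 2 * pi))
       (\<lambda>x. u x * exp (- \<i> * complex_of_real (\<Sum>j\<in>UNIV. real_of_int (k $ j) * x $ j)))
     / complex_of_real ((2 * pi) ^ CARD('n))"

definition knorm1 :: "int^'n \<Rightarrow> real" where
  "knorm1 k = (\<Sum>j\<in>UNIV. real_of_int \<bar>k $ j\<bar>)"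

definition S_norm :: "real \<Rightarrow> (real^'n \<Rightarrow> complex) \<Rightarrow> ennreal" where
  "S_norm s u = (\<Sum>\<^sub>\<infinity>k. ennreal ((1 + knorm1 k) powr s * norm (fourier_coeff u k)))"

definition wiener_space :: "real \<Rightarrow> (real^'n \<Rightarrow> complex) set" where
  "wiener_space s = {u. torus_continuous u \<and> S_norm s u < \<infinity>}"

end

theory Submission
  imports Defs
begin


definition ip :: "int^'n \<Rightarrow> real^'n \<Rightarrow> real" where
  "ip k x = (\<Sum>j\<in>UNIV. real_of_int (k $ j) * x $ j)"

definition ee :: "int^'n \<Rightarrow> real^'n \<Rightarrow> complex" where
  "ee k x = exp (\<i> * complex_of_real (ip k x))"

abbreviation cube :: "(real^'n) set" where "cube \<equiv> cbox 0 (\<chi> i. 2 * pi)"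

lemma ip_add: "ip (k + l) x = ip k x + ip l x"
  by (simp add: ip_def sum.distrib algebra_simps)
lemma ip_uminus: "ip (- k) x = - ip k x"
  by (simp add: ip_def sum_negf)
lemma ip_zero[simp]: "ip 0 x = 0"
  by (simp add: ip_def)
lemma ee_add: "ee (k + l) x = ee k x * ee l x"
  by (simp add: ee_def ip_add distrib_left exp_add)
lemma ee_uminus: "ee (- k) x = cnj (ee k x)"
  by (simp add: ee_def ip_uminus exp_cnj)
lemma norm_ee[simp]: "norm (ee k x) = 1"
  by (simp add: ee_def)
lemma ee_zero[simp]: "ee 0 x = 1"
  by (simp add: ee_def)
lemma continuous_on_ip: "continuous_on S (ip k)"
  unfolding ip_def by (intro continuous_intros)
lemma continuous_on_ee: "continuous_on S (ee k)"
  unfolding ee_def by (intro continuous_intros continuous_on_ip)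

lemma fourier_coeff_ee:
  fixes u :: "real^'n \<Rightarrow> complex"
  shows "fourier_coeff u k = integral cube (\<lambda>x. u x * ee (- k) x) / complex_of_real ((2 * pi) ^ CARD('n))"
  unfolding fourier_coeff_def ee_def ip_def
  by (simp add: sum_negf mult_ac)



lemma exp_1d_has_integral:
  fixes m :: real assumes "m \<in> \<int>"
  shows "((\<lambda>t. exp (\<i> * complex_of_real (m * t))) has_integral (if m = 0 then complex_of_real (2*pi) else 0)) {0..2*pi}"
proof (cases "m = 0")
  case True
  then show ?thesis using has_integral_const_real[of "1::complex" 0 "2*pi"] by (simp add: scaleR_conv_of_real)
next
  case False
  let ?F = "\<lambda>t. exp (\<i> * complex_of_real (m * t)) / (\<i> * complex_of_real m)"
  have "((\<lambda>t. exp (\<i> * complex_of_real (m * t))) has_integral (?F (2*pi) - ?F 0)) {0..2*pi}"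
  proof (rule fundamental_theorem_of_calculus)
    fix x :: real
    let ?G = "\<lambda>z::complex. exp (\<i> * complex_of_real m * z) / (\<i> * complex_of_real m)"
    have "(?G has_field_derivative exp (\<i> * complex_of_real m * complex_of_real x)) (at (complex_of_real x))"
      using False by (auto intro!: derivative_eq_intros simp: divide_simps)
    from has_vector_derivative_real_field[OF this]
    show "(?F has_vector_derivative exp (\<i> * complex_of_real (m * x))) (at x within {0..2*pi})"
      by (simp add: mult_ac)
  qed simp
  moreover have "exp (\<i> * complex_of_real (m * (2*pi))) = 1"
  proof -
    obtain z where z: "m = of_int z" using assms Ints_cases by blast
    have "\<i> * complex_of_real (m * (2*pi)) = 2 * of_int z * of_real pi * \<i>"
      by (simp add: z mult_ac)
    then show ?thesis using exp_integer_2pi[of "of_int z"] by (simp only:) simp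
  qed
  ultimately show ?thesis using False by simp
qed



lemma lborel_prod_Basis:
  fixes f :: "'a::euclidean_space \<Rightarrow> real \<Rightarrow> complex"
  assumes int: "\<And>b. b \<in> Basis \<Longrightarrow> integrable lborel (f b)"
  shows "integrable lborel (\<lambda>x::'a. \<Prod>b\<in>Basis. f b (x \<bullet> b))"
    "(\<integral>x. (\<Prod>b\<in>Basis. f b (x \<bullet> b)) \<partial>(lborel::'a measure)) = (\<Prod>b\<in>Basis. \<integral>t. f b t \<partial>lborel)"
proof -
  interpret finite_product_sigma_finite "\<lambda>_. lborel" "Basis::'a set" by standard simp
  let ?h = "\<lambda>g. \<Sum>b\<in>Basis. g b *\<^sub>R b :: 'a"
  have fm[measurable]: "f b \<in> borel_measurable borel" if "b \<in> Basis" for b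
    using int[OF that] by auto
  have h[measurable]: "?h \<in> measurable (Pi\<^sub>M Basis (\<lambda>_. lborel)) borel"
    by measurable
  have eq: "?h g \<bullet> b = g b" if "b \<in> Basis" for g b
    using that by (simp add: inner_sum_left inner_Basis if_distrib cong: if_cong)
  have F[measurable]: "(\<lambda>x::'a. \<Prod>b\<in>Basis. f b (x \<bullet> b)) \<in> borel_measurable borel"
    by measurable
  have int2: "integrable (Pi\<^sub>M Basis (\<lambda>_. lborel)) (\<lambda>g. \<Prod>b\<in>Basis. f b (g b))"
    by (rule product_integrable_prod) (auto intro: int)
  show "integrable lborel (\<lambda>x::'a. \<Prod>b\<in>Basis. f b (x \<bullet> b))"
    apply (subst lborel_eq)
    apply (subst integrable_distr_eq[OF h F])
    using int2 by (simp add: eq)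
  have "(\<integral>x. (\<Prod>b\<in>Basis. f b (x \<bullet> b)) \<partial>(lborel::'a measure))
      = (\<integral>g. (\<Prod>b\<in>Basis. f b (?h g \<bullet> b)) \<partial>(Pi\<^sub>M Basis (\<lambda>_. lborel)))"
    apply (subst lborel_eq)
    apply (subst integral_distr[OF h F])
    by simp
  also have "\<dots> = (\<integral>g. (\<Prod>b\<in>Basis. f b (g b)) \<partial>(Pi\<^sub>M Basis (\<lambda>_. lborel)))"
    by (simp add: eq)
  also have "\<dots> = (\<Prod>b\<in>Basis. \<integral>t. f b t \<partial>lborel)"
    by (rule product_integral_prod) (auto intro: int)
  finally show "(\<integral>x. (\<Prod>b\<in>Basis. f b (x \<bullet> b)) \<partial>(lborel::'a measure)) = (\<Prod>b\<in>Basis. \<integral>t. f b t \<partial>lborel)" .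
qed



lemma ball_Basis_vec: "(\<forall>b\<in>(Basis::(real^'n) set). P b) \<longleftrightarrow> (\<forall>i. P (axis i 1))"
  by (auto simp: Basis_vec_def)

lemma ee_has_integral:
  fixes m :: "int^'n"
  shows "(ee m has_integral (if m = 0 then complex_of_real ((2*pi)^CARD('n)) else 0)) cube"
proof -
  define rm :: "real^'n" where "rm = (\<chi> j. real_of_int (m $ j))"
  define f where "f b t = complex_of_real (indicator {0..2*pi} t) * exp (\<i> * complex_of_real ((rm \<bullet> b) * t))" for b :: "real^'n" and t :: real
  have rmb: "rm \<bullet> b \<in> \<int>" if "b \<in> Basis" for b
    using that by (auto simp: Basis_vec_def rm_def inner_axis)
  have si: "set_integrable lborel {0..2*pi} (\<lambda>t. exp (\<i> * complex_of_real ((rm \<bullet> b) * t)))" for b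
    by (rule borel_integrable_atLeastAtMost') (intro continuous_intros)
  have fint: "integrable lborel (f b)" for b
    using si[of b] unfolding set_integrable_def f_def by (simp add: scaleR_conv_of_real)
  have fval: "(\<integral>t. f b t \<partial>lborel) = (if rm \<bullet> b = 0 then complex_of_real (2*pi) else 0)" if "b \<in> Basis" for b
  proof -
    have "(\<integral>t. f b t \<partial>lborel) = (LINT t : {0..2*pi} | lborel. exp (\<i> * complex_of_real ((rm \<bullet> b) * t)))"
      unfolding set_lebesgue_integral_def f_def by (simp add: scaleR_conv_of_real)
    also have "\<dots> = integral {0..2*pi} (\<lambda>t. exp (\<i> * complex_of_real ((rm \<bullet> b) * t)))"
      by (rule set_borel_integral_eq_integral(2)[OF si])
    also have "\<dots> = (if rm \<bullet> b = 0 then complex_of_real (2*pi) else 0)"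
      using exp_1d_has_integral[OF rmb[OF that]] by (rule integral_unique)
    finally show ?thesis .
  qed
  have prodeq: "(\<Prod>b\<in>Basis. f b (x \<bullet> b)) = (if x \<in> cube then ee m x else 0)" for x :: "real^'n"
  proof -
    have "(\<Prod>b\<in>Basis. f b (x \<bullet> b)) = (\<Prod>b\<in>Basis. complex_of_real (indicator {0..2*pi} (x \<bullet> b))) *
        (\<Prod>b\<in>Basis. exp (\<i> * complex_of_real ((rm \<bullet> b) * (x \<bullet> b))))"
      unfolding f_def by (simp add: prod.distrib)
    also have "(\<Prod>b\<in>Basis. exp (\<i> * complex_of_real ((rm \<bullet> b) * (x \<bullet> b)))) = exp (\<Sum>b\<in>Basis. \<i> * complex_of_real ((rm \<bullet> b) * (x \<bullet> b)))"
      by (simp add: exp_sum)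
    also have "(\<Sum>b\<in>Basis. \<i> * complex_of_real ((rm \<bullet> b) * (x \<bullet> b))) = \<i> * complex_of_real (rm \<bullet> x)"
      by (simp add: euclidean_inner[of rm x] sum_distrib_left)
    also have "rm \<bullet> x = ip m x"
      by (simp add: rm_def ip_def inner_vec_def)
    also have "(\<Prod>b\<in>Basis. complex_of_real (indicator {0..2*pi} (x \<bullet> b))) = (if x \<in> cube then 1 else 0)"
    proof (cases "x \<in> cube")
      case True
      then have "\<forall>b\<in>Basis. x \<bullet> b \<in> {0..2*pi}"
        by (auto simp: mem_box ball_Basis_vec inner_axis)
      then show ?thesis using True by (simp add: indicator_def)
    next
      case False
      then obtain i where "x $ i \<notin> {0..2*pi}"
        by (auto simp: mem_box ball_Basis_vec inner_axis)
      then obtain b where "b \<in> Basis" "x \<bullet> b \<notin> {0..2*pi}"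
        by (intro that[of "axis i 1"]) (auto simp: Basis_vec_def inner_axis)
      then show ?thesis using False
        by (intro trans[OF prod_zero]) (auto simp: indicator_def)
    qed
    finally show ?thesis by (simp add: ee_def)
  qed
  have "((\<lambda>x. \<Prod>b\<in>Basis. f b (x \<bullet> b)) has_integral (\<Prod>b\<in>Basis. \<integral>t. f b t \<partial>lborel)) UNIV"
    using has_integral_integral_lborel[OF lborel_prod_Basis(1)[of f, OF fint]]
      lborel_prod_Basis(2)[of f, OF fint] by simp
  then have "(ee m has_integral (\<Prod>b\<in>Basis. \<integral>t. f b t \<partial>lborel)) cube"
    by (simp add: prodeq has_integral_restrict_UNIV)
  moreover have "(\<Prod>b\<in>(Basis::(real^'n) set). \<integral>t. f b t \<partial>lborel) = (if m = 0 then complex_of_real ((2*pi)^CARD('n)) else 0)"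
  proof (cases "m = 0")
    case True
    then have "rm = 0" by (simp add: rm_def vec_eq_iff)
    then show ?thesis using True by (simp add: fval)
  next
    case False
    then obtain j where "m $ j \<noteq> 0" by (auto simp: vec_eq_iff)
    then have "axis j 1 \<in> (Basis::(real^'n) set)" "rm \<bullet> axis j 1 \<noteq> 0"
      by (auto simp: Basis_vec_def rm_def inner_axis)
    then show ?thesis using False
      by (intro trans[OF prod_zero]) (auto simp: fval intro!: bexI[of _ "axis j 1"])
  qed
  ultimately show ?thesis by simp
qed



lemma periodic_nat:
  assumes "torus_continuous u"
  shows "u (x + (2*pi*real n) *\<^sub>R axis i 1) = u x"
proof (induction n arbitrary: x)
  case 0 then show ?case by simp
next
  case (Suc n)
  have "x + (2*pi*real (Suc n)) *\<^sub>R axis i 1 = (x + (2*pi*real n) *\<^sub>R axis i 1) + (2*pi) *\<^sub>R axis i 1"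
    by (simp add: algebra_simps)
  moreover have "\<forall>x i. u (x + (2 * pi) *\<^sub>R axis i 1) = u x"
    using assms by (simp add: torus_continuous_def)
  ultimately show ?case using Suc.IH by metis
qed

lemma periodic_int:
  assumes "torus_continuous u"
  shows "u (x + (2*pi*real_of_int z) *\<^sub>R axis i 1) = u x"
proof (cases "z \<ge> 0")
  case True
  then show ?thesis using periodic_nat[OF assms, of x "nat z" i] by simp
next
  case False
  define n where "n = nat (- z)"
  have z: "real_of_int z = - real n" using False by (simp add: n_def)
  have "u x = u ((x + (2*pi*real_of_int z) *\<^sub>R axis i 1) + (2*pi*real n) *\<^sub>R axis i 1)"
    by (simp add: z algebra_simps)
  also have "\<dots> = u (x + (2*pi*real_of_int z) *\<^sub>R axis i 1)"
    by (rule periodic_nat[OF assms])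
  finally show ?thesis by simp
qed

lemma axis_expansion_2pi:
  fixes z :: "int^'n"
  shows "(\<Sum>j\<in>UNIV. (2*pi*real_of_int (z $ j)) *\<^sub>R axis j 1) = (\<chi> j. 2*pi*real_of_int (z $ j) :: real^'n)"
proof -
  have "(\<Sum>j\<in>UNIV. (2*pi*real_of_int (z $ j)) *\<^sub>R axis j 1) = (\<Sum>j\<in>UNIV. ((\<chi> j. 2*pi*real_of_int (z $ j) :: real^'n) $ j) *s axis j 1)"
    by (simp add: scalar_mult_eq_scaleR)
  also have "\<dots> = (\<chi> j. 2*pi*real_of_int (z $ j) :: real^'n)" by (rule basis_expansion)
  finally show ?thesis .
qed

lemma periodic_vec:
  fixes z :: "int^'n"
  assumes "torus_continuous u"
  shows "u (x + (\<chi> j. 2*pi*real_of_int (z $ j))) = u x"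
proof -
  have A: "u (x + (\<Sum>j\<in>F. (2*pi*real_of_int (z $ j)) *\<^sub>R axis j 1)) = u x" if "finite F" for F x
    using that
  proof (induction F arbitrary: x rule: finite_induct)
    case empty then show ?case by simp
  next
    case (insert j F)
    have "u (x + (\<Sum>j\<in>insert j F. (2*pi*real_of_int (z $ j)) *\<^sub>R axis j 1)) =
          u ((x + (\<Sum>j\<in>F. (2*pi*real_of_int (z $ j)) *\<^sub>R axis j 1)) + (2*pi*real_of_int (z $ j)) *\<^sub>R axis j 1)"
      using insert.hyps by (simp add: ac_simps)
    also have "\<dots> = u (x + (\<Sum>j\<in>F. (2*pi*real_of_int (z $ j)) *\<^sub>R axis j 1))"
      by (rule periodic_int[OF assms])
    finally show ?case using insert by simp
  qed
  show ?thesis using A[OF finite_class.finite_UNIV, of x] unfolding axis_expansion_2pi .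
qed

lemma periodic_reduce:
  assumes "torus_continuous u"
  shows "\<exists>y\<in>cube. u x = u y"
proof -
  define z :: "int^'a" where "z = (\<chi> j. - \<lfloor>x $ j / (2*pi)\<rfloor>)"
  define y where "y = x + (\<chi> j. 2*pi*real_of_int (z $ j))"
  have "y \<in> cube"
  proof -
    have "0 \<le> y $ j \<and> y $ j \<le> 2*pi" for j
    proof -
      have a: "real_of_int \<lfloor>x $ j / (2*pi)\<rfloor> \<le> x $ j / (2*pi)" by (rule of_int_floor_le)
      have b: "x $ j / (2*pi) < real_of_int \<lfloor>x $ j / (2*pi)\<rfloor> + 1" by (rule real_of_int_floor_add_one_gt)
      have "y $ j = x $ j - 2*pi * real_of_int \<lfloor>x $ j / (2*pi)\<rfloor>" by (simp add: y_def z_def)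
      moreover have "2*pi * real_of_int \<lfloor>x $ j / (2*pi)\<rfloor> \<le> x $ j"
        using mult_left_mono[OF a, of "2*pi"] pi_gt_zero by simp
      moreover have "x $ j < 2*pi * real_of_int \<lfloor>x $ j / (2*pi)\<rfloor> + 2*pi"
        using mult_strict_left_mono[OF b, of "2*pi"] pi_gt_zero by (simp add: algebra_simps)
      ultimately show ?thesis by simp
    qed
    then show ?thesis by (simp add: mem_box_cart)
  qed
  moreover have "u x = u y" unfolding y_def by (simp add: periodic_vec[OF assms])
  ultimately show ?thesis by blast
qed



inductive TP :: "(real^'n \<Rightarrow> complex) \<Rightarrow> bool" where
  TP_ee: "TP (\<lambda>x. c * ee k x)"
| TP_add: "TP f \<Longrightarrow> TP g \<Longrightarrow> TP (\<lambda>x. f x + g x)"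

lemma TP_const: "TP (\<lambda>x. c)"
  using TP_ee[of c 0] by simp

lemma TP_cont: "TP f \<Longrightarrow> continuous_on S f"
  by (induction rule: TP.induct) (auto intro!: continuous_intros continuous_on_ee)

lemma TP_mult_ee: "TP g \<Longrightarrow> TP (\<lambda>x. (c * ee k x) * g x)"
proof (induction rule: TP.induct)
  case (TP_ee d l)
  have "(\<lambda>x. (c * ee k x) * (d * ee l x)) = (\<lambda>x. (c * d) * ee (k + l) x)"
    by (simp add: ee_add mult_ac)
  then show ?case by (simp add: TP.TP_ee)
next
  case (TP_add f g)
  then show ?case using TP.TP_add[OF TP_add.IH] by (simp add: distrib_left)
qed

lemma TP_mult: "TP f \<Longrightarrow> TP g \<Longrightarrow> TP (\<lambda>x. f x * g x)"
proof (induction rule: TP.induct)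
  case (TP_ee c k)
  then show ?case by (rule TP_mult_ee)
next
  case (TP_add f1 f2)
  then show ?case using TP.TP_add[OF TP_add.IH] by (simp add: distrib_right)
qed

lemma TP_sum: "finite I \<Longrightarrow> (\<And>i. i \<in> I \<Longrightarrow> TP (f i)) \<Longrightarrow> TP (\<lambda>x. \<Sum>i\<in>I. f i x)"
proof (induction I rule: finite_induct)
  case empty then show ?case using TP_const[of 0] by simp
next
  case (insert i I)
  then show ?case using TP_add[of "f i" "\<lambda>x. \<Sum>i\<in>I. f i x"] by simp
qed

lemma ip_axis: "ip (axis j 1) x = x $ j"
proof -
  have "real_of_int (axis j 1 $ i) * x $ i = (if i = j then x $ i else 0)" for i
    by (simp add: axis_def)
  then show ?thesis unfolding ip_def by simp
qed

lemma TP_cos: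
  fixes j :: "'n::finite"
  shows "TP (\<lambda>x. complex_of_real (cos (x $ j)))"
proof -
  have "complex_of_real (cos (x $ j)) = (1/2) * ee (axis j 1) x + (1/2) * ee (- axis j 1) x" for x :: "real^'n"
    by (simp add: cos_of_real[symmetric] cos_exp_eq ee_def ip_uminus ip_axis field_simps)
  then have e: "(\<lambda>x. complex_of_real (cos (x $ j))) = (\<lambda>x. (1/2) * ee (axis j 1) x + (1/2) * ee (- axis j 1) x)" by (rule ext)
  show ?thesis unfolding e by (rule TP_add TP_ee)+
qed

lemma TP_sin:
  fixes j :: "'n::finite"
  shows "TP (\<lambda>x. complex_of_real (sin (x $ j)))"
proof -
  have "complex_of_real (sin (x $ j)) = (1/(2*\<i>)) * ee (axis j 1) x + (-1/(2*\<i>)) * ee (- axis j 1) x" for x :: "real^'n"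
    by (simp add: sin_of_real[symmetric] sin_exp_eq ee_def ip_uminus ip_axis field_simps)
  then have e: "(\<lambda>x. complex_of_real (sin (x $ j))) = (\<lambda>x. (1/(2*\<i>)) * ee (axis j 1) x + (-1/(2*\<i>)) * ee (- axis j 1) x)" by (rule ext)
  show ?thesis unfolding e by (rule TP_add TP_ee)+
qed

definition phi :: "real^'n \<Rightarrow> (real^'n) \<times> (real^'n)" where
  "phi x = ((\<chi> j. cos (x $ j)), (\<chi> j. sin (x $ j)))"

lemma continuous_on_phi: "continuous_on S phi"
  unfolding phi_def by (intro continuous_intros continuous_on_vec_lambda)

lemma linear_pair_expand:
  fixes L :: "(real^'n) \<times> (real^'n) \<Rightarrow> real"
  assumes "bounded_linear L"
  shows "L (a, b) = (\<Sum>j\<in>UNIV. a $ j * L (axis j 1, 0) + b $ j * L (0, axis j 1))"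
proof -
  interpret bounded_linear L by fact
  have "(a, b) = (\<Sum>j\<in>UNIV. a $ j *\<^sub>R (axis j 1, 0) + b $ j *\<^sub>R (0, axis j 1))"
  proof -
    have "(\<Sum>j\<in>UNIV. a $ j *\<^sub>R (axis j 1, 0) + b $ j *\<^sub>R (0, axis j 1)) =
      ((\<Sum>j\<in>UNIV. a $ j *s axis j 1), (\<Sum>j\<in>UNIV. b $ j *s axis j 1))"
      by (simp add: prod_eq_iff fst_sum snd_sum scalar_mult_eq_scaleR)
    also have "\<dots> = (a, b)" by (simp add: basis_expansion)
    finally show ?thesis by simp
  qed
  then have "L (a, b) = L (\<Sum>j\<in>UNIV. a $ j *\<^sub>R (axis j 1, 0) + b $ j *\<^sub>R (0, axis j 1))" by simp
  also have "\<dots> = (\<Sum>j\<in>UNIV. a $ j * L (axis j 1, 0) + b $ j * L (0, axis j 1))"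
    by (simp only: sum add scaleR real_scaleR_def)
  finally show ?thesis .
qed

lemma TP_poly:
  assumes "real_polynomial_function p"
  shows "TP (\<lambda>x. complex_of_real (p (phi x)))"
  using assms
proof (induction rule: real_polynomial_function.induct)
  case (linear L)
  have eq0: "L (phi x) = (\<Sum>j\<in>UNIV. cos (x $ j) * L (axis j 1, 0) + sin (x $ j) * L (0, axis j 1))" for x
    unfolding phi_def by (subst linear_pair_expand[OF linear]) simp
  have eq: "complex_of_real (L (phi x)) = (\<Sum>j\<in>UNIV. complex_of_real (L (axis j 1, 0)) * complex_of_real (cos (x $ j))
       + complex_of_real (L (0, axis j 1)) * complex_of_real (sin (x $ j)))" for x
    unfolding eq0 of_real_sum of_real_add of_real_mult by (simp only: mult.commute)
  show ?case unfolding eq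
  proof (rule TP_sum)
    fix j
    show "TP (\<lambda>x. complex_of_real (L (axis j 1, 0)) * complex_of_real (cos (x $ j))
       + complex_of_real (L (0, axis j 1)) * complex_of_real (sin (x $ j)))"
      by (rule TP_add; rule TP_mult[OF TP_const]; rule TP_cos TP_sin)
  qed simp
next
  case (const c) then show ?case by (rule TP_const)
next
  case (add f g) show ?case unfolding of_real_add by (rule TP_add[OF add.IH])
next
  case (mult f g) show ?case unfolding of_real_mult by (rule TP_mult[OF mult.IH])
qed



lemma TP_orth:
  assumes cf: "continuous_on cube f" and z: "\<And>k. integral cube (\<lambda>x. f x * ee k x) = 0" and "TP g"
  shows "integral cube (\<lambda>x. f x * g x) = 0"
  using \<open>TP g\<close>
proof (induction rule: TP.induct)
  case (TP_ee c k)
  have "integral cube (\<lambda>x. f x * (c * ee k x)) = integral cube (\<lambda>x. c * (f x * ee k x))"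
    by (simp add: mult.left_commute)
  also have "\<dots> = c * integral cube (\<lambda>x. f x * ee k x)" by simp
  finally show ?case using z by simp
next
  case (TP_add g1 g2)
  have i1: "(\<lambda>x. f x * g1 x) integrable_on cube"
    by (intro integrable_continuous continuous_intros cf TP_cont[OF TP_add.hyps(1)])
  have i2: "(\<lambda>x. f x * g2 x) integrable_on cube"
    by (intro integrable_continuous continuous_intros cf TP_cont[OF TP_add.hyps(2)])
  have "integral cube (\<lambda>x. f x * (g1 x + g2 x)) = integral cube (\<lambda>x. f x * g1 x + f x * g2 x)"
    by (simp add: distrib_left)
  also have "\<dots> = 0" using integral_add[OF i1 i2] TP_add.IH by simp
  finally show ?case .
qed

lemma phi_eq:
  assumes tc: "torus_continuous f" and e: "phi x = phi y"
  shows "f x = f y"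
proof -
  have "\<forall>j. \<exists>n::int. x $ j = y $ j + 2 * pi * n"
  proof
    fix j
    from e have "cos (x $ j) = cos (y $ j)" "sin (x $ j) = sin (y $ j)"
      unfolding phi_def by (auto simp: vec_eq_iff)
    then show "\<exists>n::int. x $ j = y $ j + 2 * pi * n" using sin_cos_eq_iff by blast
  qed
  then obtain N where N: "\<And>j. x $ j = y $ j + 2 * pi * real_of_int (N j)" by metis
  define z :: "int^'a" where "z = (\<chi> j. N j)"
  have "x = y + (\<chi> j. 2*pi*real_of_int (z $ j))"
    by (simp add: vec_eq_iff z_def N)
  then show ?thesis using periodic_vec[OF tc, of y z] by simp
qed


lemma fourier_unique:
  fixes f :: "real^'n \<Rightarrow> complex"
  assumes tc: "torus_continuous f" and z: "\<And>k. integral cube (\<lambda>x. f x * ee k x) = 0"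
  shows "f x = 0"
proof -
  have cfU: "continuous_on UNIV f" using tc by (simp add: torus_continuous_def)
  then have cf: "continuous_on cube f" by (rule continuous_on_subset) simp
  define K where "K = phi ` (cube :: (real^'n) set)"
  have compK: "compact K" unfolding K_def
    by (intro compact_continuous_image continuous_on_phi compact_cbox)
  define G where "G zz = f (SOME x. x \<in> cube \<and> phi x = zz)" for zz
  have Gphi: "G (phi x) = f x" if "x \<in> cube" for x
  proof -
    have "\<exists>y. y \<in> cube \<and> phi y = phi x" using that by blast
    then have "(SOME y. y \<in> cube \<and> phi y = phi x) \<in> cube \<and> phi (SOME y. y \<in> cube \<and> phi y = phi x) = phi x"
      by (rule someI_ex)
    then show ?thesis unfolding G_def using phi_eq[OF tc] by metis
  qed
  have contG: "continuous_on K G"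
    unfolding continuous_on_closed
  proof (intro allI impI)
    fix T assume "closedin (top_of_set (G ` K)) T"
    then obtain C where C: "closed C" "T = G ` K \<inter> C" by (auto simp: closedin_closed)
    have eq: "K \<inter> G -` T = phi ` (cube \<inter> f -` C)"
    proof
      show "K \<inter> G -` T \<subseteq> phi ` (cube \<inter> f -` C)"
        using C(2) Gphi by (auto simp: K_def)
      show "phi ` (cube \<inter> f -` C) \<subseteq> K \<inter> G -` T"
        using C(2) Gphi by (auto simp: K_def)
    qed
    have "closed (f -` C)"
      using C(1) cfU by (intro continuous_closed_vimage) (auto simp: continuous_on_eq_continuous_at)
    then have "compact (cube \<inter> f -` C)" by (intro compact_Int_closed compact_cbox)
    then have "compact (phi ` (cube \<inter> f -` C))"
      by (intro compact_continuous_image continuous_on_phi)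
    then have "closed (phi ` (cube \<inter> f -` C))" by (rule compact_imp_closed)
    then show "closedin (top_of_set K) (K \<inter> G -` T)"
      unfolding eq by (intro closed_subset) (auto simp: K_def)
  qed
  obtain B where B: "B > 0" "\<And>x. x \<in> cube \<Longrightarrow> norm (f x) \<le> B"
  proof -
    have "bounded (f ` cube)" by (intro compact_imp_bounded compact_continuous_image cf compact_cbox)
    then show ?thesis using that by (auto simp: bounded_pos)
  qed
  define V where "V = Henstock_Kurzweil_Integration.content (cube :: (real^'n) set)"
  have V: "V \<ge> 0" by (simp add: V_def)
  define I where "I = integral cube (\<lambda>x. f x * cnj (f x))"
  have est: "norm I \<le> B * (2 * e) * V" if e: "e > 0" for e
  proof -
    obtain p1 where p1: "real_polynomial_function p1" "\<And>zz. zz \<in> K \<Longrightarrow> \<bar>Re (G zz) - p1 zz\<bar> < e"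
      using Stone_Weierstrass_real_polynomial_function[OF compK _ e, of "\<lambda>zz. Re (G zz)"]
        contG by (metis continuous_on_Re)
    obtain p2 where p2: "real_polynomial_function p2" "\<And>zz. zz \<in> K \<Longrightarrow> \<bar>Im (G zz) - p2 zz\<bar> < e"
      using Stone_Weierstrass_real_polynomial_function[OF compK _ e, of "\<lambda>zz. Im (G zz)"]
        contG by (metis continuous_on_Im)
    define P where "P x = complex_of_real (p1 (phi x)) + (- \<i>) * complex_of_real (p2 (phi x))" for x
    have TPP: "TP P" unfolding P_def
      by (intro TP_add TP_poly p1 p2 TP_mult[OF TP_const])
    have int0: "integral cube (\<lambda>x. f x * P x) = 0" by (rule TP_orth[OF cf z TPP])
    have i1: "(\<lambda>x. f x * cnj (f x)) integrable_on cube"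
      by (intro integrable_continuous continuous_intros cf)
    have i2: "(\<lambda>x. f x * P x) integrable_on cube"
      by (intro integrable_continuous continuous_intros cf TP_cont[OF TPP])
    have "I = integral cube (\<lambda>x. f x * cnj (f x)) - integral cube (\<lambda>x. f x * P x)"
      by (simp add: I_def int0)
    also have "\<dots> = integral cube (\<lambda>x. f x * (cnj (f x) - P x))"
      using integral_diff[OF i1 i2] by (simp add: right_diff_distrib)
    finally have Ieq: "I = integral cube (\<lambda>x. f x * (cnj (f x) - P x))" .
    have bnd: "norm (f x * (cnj (f x) - P x)) \<le> B * (2 * e)" if x: "x \<in> cube" for x
    proof -
      have "phi x \<in> K" using x by (simp add: K_def)
      then have a: "\<bar>Re (f x) - p1 (phi x)\<bar> < e" "\<bar>Im (f x) - p2 (phi x)\<bar> < e"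
        using p1(2)[of "phi x"] p2(2)[of "phi x"] Gphi[OF x] by simp_all
      have "cnj (f x) - P x = complex_of_real (Re (f x) - p1 (phi x)) - \<i> * complex_of_real (Im (f x) - p2 (phi x))"
        by (simp add: P_def complex_eq_iff)
      then have "norm (cnj (f x) - P x) \<le> \<bar>Re (f x) - p1 (phi x)\<bar> + \<bar>Im (f x) - p2 (phi x)\<bar>"
        using norm_triangle_ineq4[of "complex_of_real (Re (f x) - p1 (phi x))" "\<i> * complex_of_real (Im (f x) - p2 (phi x))"]
        by (simp add: norm_mult del: of_real_diff)
      also have "\<dots> \<le> 2 * e" using a by simp
      finally have "norm (cnj (f x) - P x) \<le> 2 * e" .
      then show ?thesis
        unfolding norm_mult using B(2)[OF x] B(1) by (intro mult_mono) auto
    qed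
    have "norm I \<le> B * (2 * e) * Henstock_Kurzweil_Integration.content (cube :: (real^'n) set)"
      unfolding Ieq
      by (rule has_integral_bound[OF _ integrable_integral bnd])
         (use B e in \<open>auto intro!: integrable_continuous continuous_intros cf TP_cont[OF TPP]\<close>)
    then show ?thesis by (simp add: V_def)
  qed
  have I0: "I = 0"
  proof (rule ccontr)
    assume "I \<noteq> 0"
    then have Np: "norm I > 0" by simp
    define e where "e = norm I / (4 * B * V + 1)"
    have D: "4 * B * V + 1 > 0" using B(1) V by (simp add: add_nonneg_pos)
    then have epos: "e > 0" using Np by (simp add: e_def)
    have "B * (2 * e) * V = norm I * (2 * B * V) / (4 * B * V + 1)"
      by (simp add: e_def field_simps)
    also have "\<dots> < norm I"
    proof -
      have BV: "B * V \<ge> 0" using B(1) V by simp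
      have "norm I * (2 * B * V) < norm I * (4 * B * V + 1)"
        using Np BV by (intro mult_strict_left_mono) auto
      then show ?thesis by (simp add: pos_divide_less_eq[OF D])
    qed
    finally show False using est[OF epos] by simp
  qed
  define h where "h x = (norm (f x))^2" for x
  have ch: "continuous_on cube h" unfolding h_def by (intro continuous_intros cf)
  have "(h has_integral integral cube h) cube" by (intro integrable_integral integrable_continuous ch)
  from has_integral_of_real[OF this, where 'b=complex]
  have "((\<lambda>x. f x * cnj (f x)) has_integral complex_of_real (integral cube h)) cube"
    unfolding h_def complex_norm_square .
  then have "complex_of_real (integral cube h) = I" unfolding I_def by (simp add: integral_unique)
  then have ih: "integral cube h = 0" using I0 by simp
  have bne: "box 0 (\<chi> i. 2 * pi) \<noteq> ({} :: (real^'n) set)"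
    by (simp add: box_ne_empty ball_Basis_vec inner_axis)
  have h0: "\<forall>x\<in>cube. h x = 0"
    using integral_cbox_eq_0_iff[OF ch bne] ih by (simp add: h_def)
  obtain y where y: "y \<in> cube" "f x = f y" using periodic_reduce[OF tc] by blast
  then show ?thesis using h0 by (simp add: h_def)
qed



lemma tail_bound:
  fixes c :: "'k \<Rightarrow> complex" and h :: "'k \<Rightarrow> complex"
  assumes summ: "(\<lambda>k. norm (c k)) summable_on UNIV" and bd: "\<And>k. norm (h k) \<le> M" and M: "M \<ge> 0"
    and F: "finite F"
  shows "(\<lambda>k. c k * h k) summable_on UNIV"
    "norm (infsum (\<lambda>k. c k * h k) UNIV - (\<Sum>k\<in>F. c k * h k)) \<le> M * (infsum (\<lambda>k. norm (c k)) UNIV - (\<Sum>k\<in>F. norm (c k)))"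
proof -
  have ab: "(\<lambda>k. norm (c k * h k)) summable_on UNIV"
    by (rule summable_on_comparison_test[where f="\<lambda>k. norm (c k) * M"])
       (use summ M bd in \<open>auto simp: norm_mult intro: summable_on_cmult_left mult_left_mono\<close>)
  then show sm: "(\<lambda>k. c k * h k) summable_on UNIV" by (rule abs_summable_summable)
  have sm2: "(\<lambda>k. c k * h k) summable_on (- F)" by (rule summable_on_subset[OF sm]) auto
  have sn2: "(\<lambda>k. norm (c k)) summable_on (- F)" by (rule summable_on_subset[OF summ]) auto
  have U: "UNIV = F \<union> (- F)" by auto
  have e1: "infsum (\<lambda>k. c k * h k) UNIV - (\<Sum>k\<in>F. c k * h k) = infsum (\<lambda>k. c k * h k) (- F)"
    using infsum_Un_disjoint[of "\<lambda>k. c k * h k" F "- F"] F sm2 U by (simp)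
  have e2: "infsum (\<lambda>k. norm (c k)) UNIV - (\<Sum>k\<in>F. norm (c k)) = infsum (\<lambda>k. norm (c k)) (- F)"
    using infsum_Un_disjoint[of "\<lambda>k. norm (c k)" F "- F"] F sn2 U by (simp)
  have "norm (infsum (\<lambda>k. c k * h k) (- F)) \<le> infsum (\<lambda>k. norm (c k) * M) (- F)"
    by (rule norm_infsum_le[OF has_sum_infsum[OF sm2] has_sum_infsum])
       (use sn2 bd in \<open>auto simp: norm_mult intro: summable_on_cmult_left mult_left_mono\<close>)
  also have "\<dots> = M * infsum (\<lambda>k. norm (c k)) (- F)"
    using infsum_cmult_right[of M "\<lambda>k. norm (c k)" "- F"] sn2 by (simp add: mult.commute)
  finally show "norm (infsum (\<lambda>k. c k * h k) UNIV - (\<Sum>k\<in>F. c k * h k)) \<le> M * (infsum (\<lambda>k. norm (c k)) UNIV - (\<Sum>k\<in>F. norm (c k)))"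
    unfolding e1 e2 .
qed

lemma uniform_infsum:
  fixes c :: "'k \<Rightarrow> complex" and g :: "'k \<Rightarrow> 'a \<Rightarrow> complex"
  assumes summ: "(\<lambda>k. norm (c k)) summable_on UNIV"
    and bd: "\<And>k x. x \<in> A \<Longrightarrow> norm (g k x) \<le> M" and M: "M \<ge> 0"
  shows "uniform_limit A (\<lambda>F x. \<Sum>k\<in>F. c k * g k x) (\<lambda>x. infsum (\<lambda>k. c k * g k x) UNIV) (finite_subsets_at_top UNIV)"
proof -
  define N where "N = infsum (\<lambda>k. norm (c k)) UNIV"
  define T where "T x = infsum (\<lambda>k. c k * g k x) UNIV" for x
  define S where "S F x = (\<Sum>k\<in>F. c k * g k x)" for F x
  have lim: "((\<lambda>F. \<Sum>k\<in>F. norm (c k)) \<longlongrightarrow> N) (finite_subsets_at_top UNIV)"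
    using has_sum_infsum[OF summ] unfolding N_def has_sum_def .
  have ul: "uniform_limit A S T (finite_subsets_at_top UNIV)"
  proof (rule uniform_limitI)
    fix e :: real assume e: "e > 0"
    have "e / (M + 1) > 0" using e M by simp
    with lim have ev: "\<forall>\<^sub>F F in finite_subsets_at_top UNIV. dist (\<Sum>k\<in>F. norm (c k)) N < e / (M + 1)"
      by (rule tendstoD)
    show "\<forall>\<^sub>F F in finite_subsets_at_top UNIV. \<forall>x\<in>A. dist (S F x) (T x) < e"
      using ev eventually_finite_subsets_at_top_weakI[of UNIV finite]
    proof (rule eventually_elim2)
      fix F assume d: "dist (\<Sum>k\<in>F. norm (c k)) N < e / (M + 1)" and fin: "finite F"
      show "\<forall>x\<in>A. dist (S F x) (T x) < e"
      proof
        fix x assume x: "x \<in> A"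
        have "dist (S F x) (T x) = norm (T x - S F x)" by (simp add: dist_norm norm_minus_commute)
        also have "\<dots> \<le> M * (N - (\<Sum>k\<in>F. norm (c k)))"
          unfolding T_def S_def N_def by (rule tail_bound(2)[OF summ bd[OF x] M fin])
        also have "\<dots> \<le> M * (e / (M + 1))"
          using d M by (intro mult_left_mono) (auto simp: dist_real_def)
        also have "\<dots> < e" using e M by (simp add: field_simps)
        finally show "dist (S F x) (T x) < e" .
      qed
    qed
  qed
  then show ?thesis unfolding S_def T_def .
qed

lemma integral_infsum_exchange:
  fixes c :: "'k \<Rightarrow> complex" and g :: "'k \<Rightarrow> real^'n \<Rightarrow> complex"
  assumes summ: "(\<lambda>k. norm (c k)) summable_on UNIV"
    and cont: "\<And>k. continuous_on cube (g k)"
    and bd: "\<And>k x. x \<in> cube \<Longrightarrow> norm (g k x) \<le> M" and M: "M \<ge> 0"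
  shows "((\<lambda>k. c k * integral cube (g k)) has_sum integral cube (\<lambda>x. infsum (\<lambda>k. c k * g k x) UNIV)) UNIV"
proof -
  define T where "T x = infsum (\<lambda>k. c k * g k x) UNIV" for x
  define S where "S F x = (\<Sum>k\<in>F. c k * g k x)" for F x
  have ul: "uniform_limit cube S T (finite_subsets_at_top UNIV)"
    unfolding S_def T_def by (rule uniform_infsum[OF summ bd M])
  have cS: "continuous_on cube (S F)" for F
    unfolding S_def by (intro continuous_intros cont)
  obtain I J where I: "\<And>F. (S F has_integral I F) cube" and J: "(T has_integral J) cube"
    and IJ: "(I \<longlongrightarrow> J) (finite_subsets_at_top UNIV)"
    using uniform_limit_integral_cbox[OF ul cS finite_subsets_at_top_neq_bot] by metis
  have Ieq: "I F = (\<Sum>k\<in>F. c k * integral cube (g k))" if "finite F" for F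
  proof -
    have "(S F has_integral (\<Sum>k\<in>F. c k * integral cube (g k))) cube"
      unfolding S_def using that
      by (intro has_integral_sum has_integral_mult_right integrable_integral integrable_continuous cont)
    then show ?thesis using I[of F] by (rule has_integral_unique[symmetric])
  qed
  have ev: "\<forall>\<^sub>F F in finite_subsets_at_top UNIV. I F = (\<Sum>k\<in>F. c k * integral cube (g k))"
    by (intro eventually_finite_subsets_at_top_weakI Ieq)
  have "((\<lambda>F. \<Sum>k\<in>F. c k * integral cube (g k)) \<longlongrightarrow> J) (finite_subsets_at_top UNIV)"
    by (rule Lim_transform_eventually[OF IJ ev])
  then show ?thesis unfolding has_sum_def using J integral_unique unfolding T_def by blast
qed



lemma has_sum_delta: "((\<lambda>j. if j = k then a else (0::'b::{comm_monoid_add,topological_space})) has_sum a) UNIV"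
proof -
  have "((\<lambda>j. if j = k then a else 0) has_sum a) {k}"
    using has_sum_finite[of "{k}" "\<lambda>j. if j = k then a else 0"] by simp
  then show ?thesis
    using has_sum_cong_neutral[of UNIV "{k}" "\<lambda>j. if j = k then a else 0" "\<lambda>j. if j = k then a else 0" a]
    by auto
qed

lemma ip_add_x: "ip k (x + y) = ip k x + ip k y"
  by (simp add: ip_def sum.distrib algebra_simps)

lemma ip_axis_x: "ip k (c *\<^sub>R axis i 1) = c * real_of_int (k $ i)"
proof -
  have "real_of_int (k $ j) * (c *\<^sub>R axis i 1) $ j = (if j = i then c * real_of_int (k $ i) else 0)" for j
    by (simp add: axis_def)
  then show ?thesis unfolding ip_def by simp
qed

lemma ee_periodic: "ee k (x + (2 * pi) *\<^sub>R axis i 1) = ee k x"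
proof -
  have "ee k (x + (2 * pi) *\<^sub>R axis i 1) = exp (\<i> * complex_of_real (ip k x) + \<i> * (of_int (k $ i) * (of_real pi * 2)))"
    by (simp add: ee_def ip_add_x ip_axis_x algebra_simps)
  also have "\<dots> = ee k x" by (simp only: exp_plus_2pin ee_def)
  finally show ?thesis .
qed

lemma fourier_expansion:
  fixes u :: "real^'n \<Rightarrow> complex"
  assumes tc: "torus_continuous u" and summ: "(\<lambda>k. norm (fourier_coeff u k)) summable_on UNIV"
  shows "((\<lambda>k. fourier_coeff u k * ee k x) has_sum u x) UNIV"
proof -
  let ?c = "fourier_coeff u"
  define W where "W x = infsum (\<lambda>k. ?c k * ee k x) UNIV" for x
  define V where "V = complex_of_real ((2 * pi) ^ CARD('n))"
  have Vnz: "V \<noteq> 0" by (simp add: V_def)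
  have smW: "(\<lambda>k. ?c k * ee k x) summable_on UNIV" for x
    by (rule tail_bound(1)[OF summ, where M=1 and F="{}"]) auto
  have ulW: "uniform_limit UNIV (\<lambda>F x. \<Sum>k\<in>F. ?c k * ee k x) W (finite_subsets_at_top UNIV)"
    unfolding W_def by (rule uniform_infsum[OF summ, where M=1]) auto
  have contW: "continuous_on UNIV W"
  proof (rule uniform_limit_theorem[OF _ ulW])
    show "\<forall>\<^sub>F F in finite_subsets_at_top UNIV. continuous_on UNIV (\<lambda>x. \<Sum>k\<in>F. ?c k * ee k x)"
      by (intro always_eventually allI continuous_on_sum continuous_on_mult continuous_on_const continuous_on_ee)
    show "\<not> trivial_limit (finite_subsets_at_top (UNIV :: (int^'n) set))"
      by (simp add: finite_subsets_at_top_neq_bot)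
  qed
  have perW: "W (x + (2 * pi) *\<^sub>R axis i 1) = W x" for x i
    unfolding W_def ee_periodic ..
  define D where "D x = u x - W x" for x
  have tcD: "torus_continuous D"
    using tc contW perW unfolding torus_continuous_def D_def
    by (auto intro: continuous_intros)
  have coefW: "integral cube (\<lambda>x. W x * ee (- k) x) = ?c k * V" for k
  proof -
    have eq: "W x * ee (- k) x = infsum (\<lambda>j. ?c j * ee (j - k) x) UNIV" for x
    proof -
      have "W x * ee (- k) x = infsum (\<lambda>j. ?c j * ee j x * ee (- k) x) UNIV"
        unfolding W_def by (rule infsum_cmult_left[symmetric]) (use smW in auto)
      then show ?thesis by (simp add: ee_add[symmetric] mult.assoc)
    qed
    have hs: "((\<lambda>j. ?c j * integral cube (ee (j - k))) has_sum integral cube (\<lambda>x. W x * ee (- k) x)) UNIV"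
      unfolding eq by (rule integral_infsum_exchange[OF summ continuous_on_ee, where M=1]) auto
    have "(\<lambda>j. ?c j * integral cube (ee (j - k))) = (\<lambda>j. if j = k then ?c k * V else 0)"
    proof
      fix j
      show "?c j * integral cube (ee (j - k)) = (if j = k then ?c k * V else 0)"
        using integral_unique[OF ee_has_integral[of "j - k"]] by (auto simp: V_def)
    qed
    with hs have "((\<lambda>j. if j = k then ?c k * V else 0) has_sum integral cube (\<lambda>x. W x * ee (- k) x)) UNIV"
      by simp
    from has_sum_unique[OF this has_sum_delta] show ?thesis by simp
  qed
  have coefU: "integral cube (\<lambda>x. u x * ee (- k) x) = ?c k * V" for k
    unfolding fourier_coeff_ee V_def by simp
  have "D x = 0"
  proof (rule fourier_unique[OF tcD])
    fix m
    have iu: "(\<lambda>x. u x * ee m x) integrable_on cube"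
      using tc by (intro integrable_continuous continuous_intros continuous_on_ee)
        (auto simp: torus_continuous_def intro: continuous_on_subset)
    have iw: "(\<lambda>x. W x * ee m x) integrable_on cube"
      using contW by (intro integrable_continuous continuous_intros continuous_on_ee)
        (auto intro: continuous_on_subset)
    have "integral cube (\<lambda>x. D x * ee m x) = integral cube (\<lambda>x. u x * ee m x) - integral cube (\<lambda>x. W x * ee m x)"
      unfolding D_def using integral_diff[OF iu iw] by (simp add: left_diff_distrib)
    also have "\<dots> = 0" using coefU[of "- m"] coefW[of "- m"] by simp
    finally show "integral cube (\<lambda>x. D x * ee m x) = 0" .
  qed
  then have "W x = u x" by (simp add: D_def)
  with has_sum_infsum[OF smW[of x]] show ?thesis unfolding W_def by simp
qed


lemma fourier_coeff_mult:
  fixes u v :: "real^'n \<Rightarrow> complex"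
  assumes tcu: "torus_continuous u" and tcv: "torus_continuous v"
    and summ: "(\<lambda>k. norm (fourier_coeff v k)) summable_on UNIV"
  shows "((\<lambda>j. fourier_coeff v j * fourier_coeff u (k - j)) has_sum fourier_coeff (\<lambda>x. u x * v x) k) UNIV"
proof -
  define V where "V = complex_of_real ((2 * pi) ^ CARD('n))"
  have Vnz: "V \<noteq> 0" by (simp add: V_def)
  have cu: "continuous_on cube u" using tcu by (auto simp: torus_continuous_def intro: continuous_on_subset)
  obtain B where B: "B > 0" "\<And>x. x \<in> cube \<Longrightarrow> norm (u x) \<le> B"
  proof -
    have "bounded (u ` cube)" by (intro compact_imp_bounded compact_continuous_image cu compact_cbox)
    then show ?thesis using that by (auto simp: bounded_pos)
  qed
  have eq: "u x * v x * ee (- k) x = infsum (\<lambda>j. fourier_coeff v j * (u x * ee (j - k) x)) UNIV" for x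
  proof -
    have sm: "(\<lambda>j. fourier_coeff v j * ee j x) summable_on UNIV"
      by (rule tail_bound(1)[OF summ, where M=1 and F="{}"]) auto
    have "u x * v x * ee (- k) x = (u x * ee (- k) x) * infsum (\<lambda>j. fourier_coeff v j * ee j x) UNIV"
      using infsumI[OF fourier_expansion[OF tcv summ, of x]] by (simp add: mult_ac)
    also have "\<dots> = infsum (\<lambda>j. (u x * ee (- k) x) * (fourier_coeff v j * ee j x)) UNIV"
      by (rule infsum_cmult_right[symmetric]) (use sm in auto)
    also have "\<dots> = infsum (\<lambda>j. fourier_coeff v j * (u x * ee (j - k) x)) UNIV"
      by (simp add: ee_add[symmetric] mult_ac)
    finally show ?thesis .
  qed
  have hs: "((\<lambda>j. fourier_coeff v j * integral cube (\<lambda>x. u x * ee (j - k) x)) has_sum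
      integral cube (\<lambda>x. u x * v x * ee (- k) x)) UNIV"
    unfolding eq
    by (rule integral_infsum_exchange[OF summ, where M=B])
       (use B cu in \<open>auto intro!: continuous_intros continuous_on_ee simp: norm_mult\<close>)
  have "integral cube (\<lambda>x. u x * ee (j - k) x) = fourier_coeff u (k - j) * V" for j
    unfolding fourier_coeff_ee V_def by simp
  with hs have "((\<lambda>j. (fourier_coeff v j * fourier_coeff u (k - j)) * V) has_sum
      integral cube (\<lambda>x. u x * v x * ee (- k) x)) UNIV"
    by (simp add: mult_ac)
  from has_sum_cmult_left[OF this, of "inverse V"]
  have "((\<lambda>j. fourier_coeff v j * fourier_coeff u (k - j)) has_sum
      integral cube (\<lambda>x. u x * v x * ee (- k) x) * inverse V) UNIV"
    using Vnz by (simp add: mult.assoc)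
  moreover have "integral cube (\<lambda>x. u x * v x * ee (- k) x) * inverse V = fourier_coeff (\<lambda>x. u x * v x) k"
    unfolding fourier_coeff_ee V_def by (simp add: divide_inverse)
  ultimately show ?thesis by simp
qed



lemma powr_subadd:
  fixes A B t :: real
  assumes A: "A > 0" and B: "B > 0" and t: "0 \<le> t" "t \<le> 1"
  shows "(A + B) powr t \<le> A powr t + B powr t"
proof -
  have "(A + B) powr t = (A + B) * (A + B) powr (t - 1)"
    using A B by (simp add: powr_add[symmetric] powr_diff)
  also have "\<dots> = A * (A + B) powr (t - 1) + B * (A + B) powr (t - 1)" by (simp add: distrib_right)
  also have "A * (A + B) powr (t - 1) \<le> A * A powr (t - 1)"
    using A B t by (intro mult_left_mono powr_mono2') auto
  also have "B * (A + B) powr (t - 1) \<le> B * B powr (t - 1)"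
    using A B t by (intro mult_left_mono powr_mono2') auto
  also have "A * A powr (t - 1) = A powr t" using A by (simp add: powr_diff)
  also have "B * B powr (t - 1) = B powr t" using B by (simp add: powr_diff)
  finally show ?thesis by simp
qed

lemma weight_ineq:
  fixes a b s :: real
  assumes a: "a \<ge> 0" and b: "b \<ge> 0" and s: "s \<ge> 0"
  shows "(1 + a + b) powr s \<le> (\<Sum>m = 0..nat \<lfloor>s\<rfloor>. real (nat \<lfloor>s\<rfloor> choose m) *
      ((1 + a) powr (s - real m) * (1 + b) powr real m + (1 + b) powr (s - real m) * (1 + a) powr real m))"
proof -
  define N where "N = nat \<lfloor>s\<rfloor>"
  define t where "t = s - real N"
  define A where "A = 1 + a"
  define B where "B = 1 + b"
  have A: "A > 0" "A \<ge> 1" using a by (auto simp: A_def)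
  have B: "B > 0" "B \<ge> 1" using b by (auto simp: B_def)
  have t: "0 \<le> t" "t \<le> 1" using s by (auto simp: t_def N_def) linarith+
  have sNt: "s = real N + t" by (simp add: t_def)
  have "(1 + a + b) powr s \<le> (A + B) powr s"
    using a b s by (intro powr_mono2) (auto simp: A_def B_def)
  also have "\<dots> = (A + B) ^ N * (A + B) powr t"
    using A B by (simp add: sNt powr_add powr_realpow)
  also have "\<dots> \<le> (A + B) ^ N * (A powr t + B powr t)"
    using A B t by (intro mult_left_mono powr_subadd) auto
  also have "(A + B) ^ N = (\<Sum>m = 0..N. real (N choose m) * A ^ m * B ^ (N - m))"
    by (simp add: binomial_ring atMost_atLeast0)
  also have "(\<Sum>m = 0..N. real (N choose m) * A ^ m * B ^ (N - m)) * (A powr t + B powr t) =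
     (\<Sum>m = 0..N. real (N choose m) * (A powr (real (N - m) + t) * B powr real m)) +
     (\<Sum>m = 0..N. real (N choose m) * (B powr (s - real m) * A powr real m))"
  proof -
    have "(\<Sum>m = 0..N. real (N choose m) * A ^ m * B ^ (N - m)) * (A powr t + B powr t) =
      (\<Sum>m = 0..N. real (N choose m) * (A powr (real m + t) * B powr real (N - m))) +
      (\<Sum>m = 0..N. real (N choose m) * (B powr (s - real m) * A powr real m))"
    proof -
      have e: "real (N choose m) * A ^ m * B ^ (N - m) * (A powr t + B powr t) =
        real (N choose m) * (A powr (real m + t) * B powr real (N - m)) +
        real (N choose m) * (B powr (s - real m) * A powr real m)" if "m \<in> {0..N}" for m
      proof -
        have "s - real m = real (N - m) + t" using that by (simp add: sNt of_nat_diff)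
        then show ?thesis using A B
          by (simp add: powr_add powr_realpow algebra_simps)
      qed
      show ?thesis unfolding sum_distrib_right sum.distrib[symmetric] by (rule sum.cong[OF refl e])
    qed
    also have "(\<Sum>m = 0..N. real (N choose m) * (A powr (real m + t) * B powr real (N - m))) =
      (\<Sum>m = 0..N. real (N choose m) * (A powr (real (N - m) + t) * B powr real m))"
    proof -
      have "(\<Sum>m = 0..N. real (N choose m) * (A powr (real m + t) * B powr real (N - m))) =
        (\<Sum>m = 0..N. real (N choose (N + 0 - m)) * (A powr (real (N + 0 - m) + t) * B powr real (N - (N + 0 - m))))"
        by (rule sum.atLeastAtMost_rev)
      also have "\<dots> = (\<Sum>m = 0..N. real (N choose m) * (A powr (real (N - m) + t) * B powr real m))"
        by (intro sum.cong refl) (auto simp: binomial_symmetric[symmetric])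
      finally show ?thesis .
    qed
    finally show ?thesis .
  qed
  also have "(\<Sum>m = 0..N. real (N choose m) * (A powr (real (N - m) + t) * B powr real m)) =
      (\<Sum>m = 0..N. real (N choose m) * (A powr (s - real m) * B powr real m))"
    by (intro sum.cong refl) (auto simp: sNt of_nat_diff algebra_simps)
  finally show ?thesis
    by (simp add: A_def B_def N_def sum.distrib[symmetric] distrib_left add_ac)
qed



definition wt :: "real \<Rightarrow> int^'n \<Rightarrow> real" where
  "wt t k = (1 + knorm1 k) powr t"

definition RR :: "real \<Rightarrow> (real^'n \<Rightarrow> complex) \<Rightarrow> real" where
  "RR t u = infsum (\<lambda>k. wt t k * norm (fourier_coeff u k)) UNIV"

lemma knorm1_nonneg: "knorm1 k \<ge> 0"
  unfolding knorm1_def by (intro sum_nonneg) auto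

lemma knorm1_add: "knorm1 (j + l) \<le> knorm1 j + knorm1 l"
  unfolding knorm1_def sum.distrib[symmetric] by (intro sum_mono) auto

lemma wt_pos: "wt t k > 0"
  using knorm1_nonneg[of k] by (simp add: wt_def)

lemma wt_zero[simp]: "wt 0 k = 1"
  using knorm1_nonneg[of k] by (simp add: wt_def)

lemma wt_mono: "t \<le> t' \<Longrightarrow> wt t k \<le> wt t' k"
  using knorm1_nonneg[of k] unfolding wt_def by (intro powr_mono) auto

lemma has_sum_sum_fin:
  fixes f :: "'i \<Rightarrow> 'a \<Rightarrow> 'b::topological_comm_monoid_add"
  shows "finite I \<Longrightarrow> (\<And>i. i \<in> I \<Longrightarrow> (f i has_sum S i) A) \<Longrightarrow> ((\<lambda>x. \<Sum>i\<in>I. f i x) has_sum (\<Sum>i\<in>I. S i)) A"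
proof (induction I rule: finite_induct)
  case empty then show ?case by simp
next
  case (insert i I)
  have a: "(f i has_sum S i) A" using insert.prems by simp
  have b: "((\<lambda>x. \<Sum>i\<in>I. f i x) has_sum (\<Sum>i\<in>I. S i)) A" using insert.IH insert.prems by simp
  show ?case using has_sum_add[OF a b] insert.hyps by simp
qed

lemma S_norm_eq:
  fixes u :: "real^'n \<Rightarrow> complex"
  assumes sm: "(\<lambda>k. wt t k * norm (fourier_coeff u k)) summable_on UNIV"
  shows "S_norm t u = ennreal (RR t u)"
proof -
  have nn: "0 \<le> wt t k * norm (fourier_coeff u k)" for k using wt_pos[of t k] by simp
  have "S_norm t u = infsum (\<lambda>k. ennreal (wt t k * norm (fourier_coeff u k))) UNIV"
    by (simp add: S_norm_def wt_def)
  also have "\<dots> = (SUP F\<in>{F. finite F \<and> F \<subseteq> UNIV}. sum (\<lambda>k. ennreal (wt t k * norm (fourier_coeff u k))) F)"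
    by (rule nonneg_infsum_complete) simp
  also have "\<dots> = (SUP F\<in>{F. finite F \<and> F \<subseteq> UNIV}. ennreal (sum (\<lambda>k. wt t k * norm (fourier_coeff u k)) F))"
    using nn by (simp add: sum_ennreal)
  also have "\<dots> = ennreal (RR t u)"
    unfolding RR_def by (rule infsum_nonneg_is_SUPREMUM_ennreal[OF sm, symmetric]) (use nn in auto)
  finally show ?thesis .
qed

lemma S_norm_summable:
  fixes u :: "real^'n \<Rightarrow> complex"
  assumes fin: "S_norm t u < \<infinity>"
  shows "(\<lambda>k. wt t k * norm (fourier_coeff u k)) summable_on UNIV"
proof (rule nonneg_bdd_above_summable_on)
  show "0 \<le> wt t k * norm (fourier_coeff u k)" for k using wt_pos[of t k] by simp
  show "bdd_above (sum (\<lambda>k. wt t k * norm (fourier_coeff u k)) ` {F. F \<subseteq> UNIV \<and> finite F})"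
  proof (rule bdd_aboveI2)
    fix F :: "(int^'n) set" assume F: "F \<in> {F. F \<subseteq> UNIV \<and> finite F}"
    have nn: "0 \<le> wt t k * norm (fourier_coeff u k)" for k using wt_pos[of t k] by simp
    have "ennreal (sum (\<lambda>k. wt t k * norm (fourier_coeff u k)) F) = sum (\<lambda>k. ennreal (wt t k * norm (fourier_coeff u k))) F"
      using nn by (simp add: sum_ennreal)
    also have "\<dots> \<le> (SUP F\<in>{F. finite F \<and> F \<subseteq> UNIV}. sum (\<lambda>k. ennreal (wt t k * norm (fourier_coeff u k))) F)"
      using F by (intro SUP_upper) auto
    also have "\<dots> = S_norm t u"
      by (simp add: S_norm_def wt_def nonneg_infsum_complete)
    finally have le: "ennreal (sum (\<lambda>k. wt t k * norm (fourier_coeff u k)) F) \<le> S_norm t u" .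
    then show "sum (\<lambda>k. wt t k * norm (fourier_coeff u k)) F \<le> enn2real (S_norm t u)"
    proof -
      have "enn2real (ennreal (sum (\<lambda>k. wt t k * norm (fourier_coeff u k)) F)) \<le> enn2real (S_norm t u)"
        by (rule enn2real_mono[OF le]) (use fin in \<open>simp add: top.not_eq_extremum\<close>)
      moreover have "sum (\<lambda>k. wt t k * norm (fourier_coeff u k)) F \<ge> 0" by (intro sum_nonneg nn)
      ultimately show ?thesis by simp
    qed
  qed
qed

lemma summable_lower:
  fixes u :: "real^'n \<Rightarrow> complex"
  assumes sm: "(\<lambda>k. wt s k * norm (fourier_coeff u k)) summable_on UNIV" and t: "t \<le> s"
  shows "(\<lambda>k. wt t k * norm (fourier_coeff u k)) summable_on UNIV"
proof (rule summable_on_comparison_test[OF sm])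
  fix k
  show "wt t k * norm (fourier_coeff u k) \<le> wt s k * norm (fourier_coeff u k)"
    by (rule mult_right_mono[OF wt_mono[OF t]]) simp
  show "0 \<le> wt t k * norm (fourier_coeff u k)" using wt_pos[of t k] by simp
qed

lemma coeff_le_RR0:
  fixes u :: "real^'n \<Rightarrow> complex"
  assumes sm: "(\<lambda>k. wt 0 k * norm (fourier_coeff u k)) summable_on UNIV"
  shows "norm (fourier_coeff u l) \<le> RR 0 u"
proof -
  have "infsum (\<lambda>k. wt 0 k * norm (fourier_coeff u k)) {l} \<le> infsum (\<lambda>k. wt 0 k * norm (fourier_coeff u k)) UNIV"
    by (rule infsum_mono2) (use sm in auto)
  then show ?thesis by (simp add: RR_def)
qed



lemma rearr:
  fixes C Y Z :: real
  shows "(\<Sum>k\<in>F. C * (X k * Y + Z * W k) * (B * A k)) = C * (B * Y * (\<Sum>k\<in>F. X k * A k) + B * Z * (\<Sum>k\<in>F. W k * A k))"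
  by (simp add: sum_distrib_left sum.distrib algebra_simps)

lemma main_real:
  fixes u v :: "real^'n \<Rightarrow> complex" and s :: real
  assumes s: "s \<ge> 0" and tcu: "torus_continuous u" and tcv: "torus_continuous v"
    and su: "(\<lambda>k. wt s k * norm (fourier_coeff u k)) summable_on UNIV"
    and sv: "(\<lambda>k. wt s k * norm (fourier_coeff v k)) summable_on UNIV"
    and F: "finite F"
  shows "(\<Sum>k\<in>F. wt s k * norm (fourier_coeff (\<lambda>x. u x * v x) k)) \<le>
     (\<Sum>m = 0..nat \<lfloor>s\<rfloor>. real (nat \<lfloor>s\<rfloor> choose m) * (RR (s - real m) u * RR (real m) v + RR (s - real m) v * RR (real m) u))"
proof -
  define N where "N = nat \<lfloor>s\<rfloor>"
  define a where "a k = norm (fourier_coeff u k)" for k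
  define b where "b k = norm (fourier_coeff v k)" for k
  define c where "c k = norm (fourier_coeff (\<lambda>x. u x * v x) k)" for k
  have mN: "real m \<le> s" if "m \<in> {0..N}" for m
  proof -
    have "real m \<le> real N" using that by simp
    also have "real N \<le> s" using s by (simp add: N_def)
    finally show ?thesis .
  qed
  have anm: "a k \<ge> 0" "b k \<ge> 0" for k by (simp_all add: a_def b_def)
  have wa: "0 \<le> wt t x * a x" for t x using wt_pos[of t x] anm(1)[of x] by simp
  have wb: "0 \<le> b x * wt t x" for t x using wt_pos[of t x] anm(2)[of x] by simp
  have sul: "(\<lambda>k. wt t k * a k) summable_on UNIV" if "t \<le> s" for t
    unfolding a_def by (rule summable_lower[OF su that])
  have svl: "(\<lambda>k. wt t k * b k) summable_on UNIV" if "t \<le> s" for t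
    unfolding b_def by (rule summable_lower[OF sv that])
  have sb0: "b summable_on UNIV" using svl[of 0] s by simp
  have aR: "a l \<le> RR 0 u" for l
    unfolding a_def by (rule coeff_le_RR0) (use sul[of 0] s in \<open>simp add: a_def\<close>)
  have sab: "(\<lambda>j. b j * a (k - j)) summable_on UNIV" for k
  proof (rule summable_on_comparison_test[where f="\<lambda>j. b j * RR 0 u"])
    show "(\<lambda>j. b j * RR 0 u) summable_on UNIV" by (rule summable_on_cmult_left[OF sb0])
    show "b j * a (k - j) \<le> b j * RR 0 u" for j by (rule mult_left_mono[OF aR anm(2)])
    show "0 \<le> b j * a (k - j)" for j using anm by simp
  qed
  have ck: "c k \<le> infsum (\<lambda>j. b j * a (k - j)) UNIV" for k
  proof -
    have "b = (\<lambda>k. norm (fourier_coeff v k))" by (simp add: b_def fun_eq_iff)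
    then have "(\<lambda>k. norm (fourier_coeff v k)) summable_on UNIV" using sb0 by simp
    from fourier_coeff_mult[OF tcu tcv this, of k]
    show ?thesis unfolding c_def
      by (rule norm_infsum_le[OF _ has_sum_infsum[OF sab]]) (simp add: a_def b_def norm_mult)
  qed
  have step1: "(\<Sum>k\<in>F. wt s k * c k) \<le> (\<Sum>k\<in>F. infsum (\<lambda>j. wt s k * (b j * a (k - j))) UNIV)"
  proof (rule sum_mono)
    fix k
    have "wt s k * c k \<le> wt s k * infsum (\<lambda>j. b j * a (k - j)) UNIV"
      using wt_pos[of s k] ck[of k] by (intro mult_left_mono) auto
    also have "\<dots> = infsum (\<lambda>j. wt s k * (b j * a (k - j))) UNIV"
      by (rule infsum_cmult_right[symmetric]) (use sab in auto)
    finally show "wt s k * c k \<le> infsum (\<lambda>j. wt s k * (b j * a (k - j))) UNIV" .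
  qed
  define X where "X j = (\<Sum>k\<in>F. wt s k * (b j * a (k - j)))" for j
  have step2: "(\<Sum>k\<in>F. infsum (\<lambda>j. wt s k * (b j * a (k - j))) UNIV) = infsum X UNIV"
  proof -
    have "(X has_sum (\<Sum>k\<in>F. infsum (\<lambda>j. wt s k * (b j * a (k - j))) UNIV)) UNIV"
      unfolding X_def
      by (rule has_sum_sum_fin[OF F], rule has_sum_infsum, rule summable_on_cmult_right, rule sab)
    then show ?thesis by (rule infsumI[symmetric])
  qed
  define G where "G j = (\<Sum>m = 0..N. real (N choose m) *
      (b j * wt (real m) j * RR (s - real m) u + b j * wt (s - real m) j * RR (real m) u))" for j
  have sum_shift: "(\<Sum>k\<in>F. wt t (k - j) * a (k - j)) \<le> RR t u" if t: "t \<le> s" for t j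
  proof -
    have inj: "inj_on (\<lambda>k. k - j) F" by (auto simp: inj_on_def)
    have "(\<Sum>k\<in>F. wt t (k - j) * a (k - j)) = (\<Sum>l\<in>(\<lambda>k. k - j) ` F. wt t l * a l)"
      by (simp add: sum.reindex[OF inj])
    also have "\<dots> = infsum (\<lambda>l. wt t l * a l) ((\<lambda>k. k - j) ` F)"
      using F by simp
    also have "\<dots> \<le> infsum (\<lambda>l. wt t l * a l) UNIV"
      by (rule infsum_mono2) (use F sul[OF t] wa in auto)
    finally show ?thesis by (simp add: RR_def a_def)
  qed
  have XG: "X j \<le> G j" for j
  proof -
    have wk: "wt s k \<le> (\<Sum>m = 0..N. real (N choose m) * (wt (s - real m) (k - j) * wt (real m) j + wt (s - real m) j * wt (real m) (k - j)))" for k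
    proof -
      have "knorm1 k \<le> knorm1 (k - j) + knorm1 j"
        using knorm1_add[of "k - j" j] by simp
      then have "wt s k \<le> (1 + knorm1 (k - j) + knorm1 j) powr s"
        unfolding wt_def using s knorm1_nonneg[of k] by (intro powr_mono2) auto
      also have "\<dots> \<le> (\<Sum>m = 0..N. real (N choose m) * (wt (s - real m) (k - j) * wt (real m) j + wt (s - real m) j * wt (real m) (k - j)))"
        unfolding wt_def N_def by (rule weight_ineq[OF knorm1_nonneg knorm1_nonneg s])
      finally show ?thesis .
    qed
    have "X j \<le> (\<Sum>k\<in>F. (\<Sum>m = 0..N. real (N choose m) * (wt (s - real m) (k - j) * wt (real m) j + wt (s - real m) j * wt (real m) (k - j))) * (b j * a (k - j)))"
      unfolding X_def by (intro sum_mono mult_right_mono wk) (use anm in simp)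
    also have "\<dots> = (\<Sum>m = 0..N. (\<Sum>k\<in>F. real (N choose m) * (wt (s - real m) (k - j) * wt (real m) j + wt (s - real m) j * wt (real m) (k - j)) * (b j * a (k - j))))"
      by (simp add: sum_distrib_right sum.swap[of _ F])
    also have "\<dots> = (\<Sum>m = 0..N. real (N choose m) * (b j * wt (real m) j * (\<Sum>k\<in>F. wt (s - real m) (k - j) * a (k - j)) + b j * wt (s - real m) j * (\<Sum>k\<in>F. wt (real m) (k - j) * a (k - j))))"
      by (intro sum.cong refl rearr)
    also have "\<dots> \<le> G j"
      unfolding G_def
    proof (intro sum_mono mult_left_mono add_mono)
      fix m assume m: "m \<in> {0..N}"
      show "(\<Sum>k\<in>F. wt (s - real m) (k - j) * a (k - j)) \<le> RR (s - real m) u"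
        by (rule sum_shift) simp
      show "(\<Sum>k\<in>F. wt (real m) (k - j) * a (k - j)) \<le> RR (real m) u"
        by (rule sum_shift[OF mN[OF m]])
      show "0 \<le> b j * wt (real m) j" "0 \<le> b j * wt (s - real m) j"
        by (rule wb)+
    qed simp
    finally show ?thesis .
  qed
  define Val where "Val = (\<Sum>m = 0..N. real (N choose m) * (RR (real m) v * RR (s - real m) u + RR (s - real m) v * RR (real m) u))"
  have hasG: "(G has_sum Val) UNIV"
    unfolding G_def Val_def
  proof (rule has_sum_sum_fin)
    fix m assume m: "m \<in> {0..N}"
    have h1: "((\<lambda>j. wt t j * b j) has_sum RR t v) UNIV" if "t \<le> s" for t
      using has_sum_infsum[OF svl[OF that]] by (simp add: RR_def b_def)
    have h2: "((\<lambda>j. b j * wt (real m) j * RR (s - real m) u + b j * wt (s - real m) j * RR (real m) u)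
        has_sum (RR (real m) v * RR (s - real m) u + RR (s - real m) v * RR (real m) u)) UNIV"
      by (rule has_sum_add; rule has_sum_cmult_left)
         (use h1[OF mN[OF m]] h1[of "s - real m"] s in \<open>simp_all add: mult.commute\<close>)
    show "((\<lambda>j. real (N choose m) * (b j * wt (real m) j * RR (s - real m) u + b j * wt (s - real m) j * RR (real m) u))
        has_sum real (N choose m) * (RR (real m) v * RR (s - real m) u + RR (s - real m) v * RR (real m) u)) UNIV"
      by (rule has_sum_cmult_right[OF h2])
  qed simp
  have Xnn: "X j \<ge> 0" for j unfolding X_def by (intro sum_nonneg mult_nonneg_nonneg less_imp_le[OF wt_pos] anm)
  have sX: "X summable_on UNIV"
    by (rule summable_on_comparison_test[OF _ XG Xnn]) (use hasG in \<open>auto simp: summable_on_def\<close>)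
  have "infsum X UNIV \<le> infsum G UNIV"
    by (rule infsum_mono[OF sX _ XG]) (use hasG in \<open>auto simp: summable_on_def\<close>)
  also have "infsum G UNIV = Val" by (rule infsumI[OF hasG])
  finally have "(\<Sum>k\<in>F. wt s k * c k) \<le> Val" using step1 step2 by simp
  then show ?thesis by (simp add: c_def Val_def N_def mult.commute)
qed



theorem lemma4p2:
  fixes s :: real and u v :: "real^'n \<Rightarrow> complex"
  assumes "s \<ge> 0" and "u \<in> wiener_space s" and "v \<in> wiener_space s"
  shows "S_norm s (\<lambda>x. u x * v x) \<le>
    2 * (\<Sum>m = 0..nat \<lfloor>s\<rfloor>. of_nat (nat \<lfloor>s\<rfloor> choose m) *
      (S_norm (s - real m) u * S_norm (real m) v + S_norm (s - real m) v * S_norm (real m) u))"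
proof -
  note s = assms(1)
  have tcu: "torus_continuous u" and finu: "S_norm s u < \<infinity>"
    using assms(2) by (auto simp: wiener_space_def)
  have tcv: "torus_continuous v" and finv: "S_norm s v < \<infinity>"
    using assms(3) by (auto simp: wiener_space_def)
  have su: "(\<lambda>k. wt s k * norm (fourier_coeff u k)) summable_on UNIV" by (rule S_norm_summable[OF finu])
  have sv: "(\<lambda>k. wt s k * norm (fourier_coeff v k)) summable_on UNIV" by (rule S_norm_summable[OF finv])
  define N where "N = nat \<lfloor>s\<rfloor>"
  have mN: "real m \<le> s" if "m \<in> {0..N}" for m
  proof -
    have "real m \<le> real N" using that by simp
    also have "real N \<le> s" using s by (simp add: N_def)
    finally show ?thesis .
  qed
  have Su: "S_norm t u = ennreal (RR t u)" if "t \<le> s" for t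
    by (rule S_norm_eq[OF summable_lower[OF su that]])
  have Sv: "S_norm t v = ennreal (RR t v)" if "t \<le> s" for t
    by (rule S_norm_eq[OF summable_lower[OF sv that]])
  have RRnn: "RR t w \<ge> 0" for t and w :: "real^'n \<Rightarrow> complex"
    unfolding RR_def by (intro infsum_nonneg mult_nonneg_nonneg less_imp_le[OF wt_pos] norm_ge_zero)
  define Rb where "Rb = (\<Sum>m = 0..N. real (N choose m) * (RR (s - real m) u * RR (real m) v + RR (s - real m) v * RR (real m) u))"
  have Rbnn: "Rb \<ge> 0" unfolding Rb_def
    by (intro sum_nonneg mult_nonneg_nonneg add_nonneg_nonneg RRnn) simp
  have nn: "0 \<le> wt s k * norm (fourier_coeff (\<lambda>x. u x * v x) k)" for k
    using wt_pos[of s k] by simp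
  have "S_norm s (\<lambda>x. u x * v x) = infsum (\<lambda>k. ennreal (wt s k * norm (fourier_coeff (\<lambda>x. u x * v x) k))) UNIV"
    by (simp add: S_norm_def wt_def)
  also have "\<dots> = (SUP F\<in>{F. finite F \<and> F \<subseteq> UNIV}. sum (\<lambda>k. ennreal (wt s k * norm (fourier_coeff (\<lambda>x. u x * v x) k))) F)"
    by (rule nonneg_infsum_complete) simp
  also have "\<dots> \<le> ennreal Rb"
  proof (rule SUP_least)
    fix F :: "(int^'n) set" assume F: "F \<in> {F. finite F \<and> F \<subseteq> UNIV}"
    have "sum (\<lambda>k. ennreal (wt s k * norm (fourier_coeff (\<lambda>x. u x * v x) k))) F =
        ennreal (sum (\<lambda>k. wt s k * norm (fourier_coeff (\<lambda>x. u x * v x) k)) F)"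
      using nn by (simp add: sum_ennreal)
    also have "\<dots> \<le> ennreal Rb"
      using main_real[OF s tcu tcv su sv, of F] F by (intro ennreal_leI) (simp add: Rb_def N_def)
    finally show "sum (\<lambda>k. ennreal (wt s k * norm (fourier_coeff (\<lambda>x. u x * v x) k))) F \<le> ennreal Rb" .
  qed
  also have "\<dots> \<le> ennreal (2 * Rb)" using Rbnn by (intro ennreal_leI) simp
  also have "ennreal (2 * Rb) = 2 * (\<Sum>m = 0..N. of_nat (N choose m) *
      (S_norm (s - real m) u * S_norm (real m) v + S_norm (s - real m) v * S_norm (real m) u))"
  proof -
    have "(\<Sum>m = 0..N. of_nat (N choose m) *
        (S_norm (s - real m) u * S_norm (real m) v + S_norm (s - real m) v * S_norm (real m) u)) =
      (\<Sum>m = 0..N. ennreal (real (N choose m) * (RR (s - real m) u * RR (real m) v + RR (s - real m) v * RR (real m) u)))"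
    proof (rule sum.cong[OF refl])
      fix m assume m: "m \<in> {0..N}"
      have e: "S_norm (s - real m) u = ennreal (RR (s - real m) u)" "S_norm (real m) v = ennreal (RR (real m) v)"
        "S_norm (s - real m) v = ennreal (RR (s - real m) v)" "S_norm (real m) u = ennreal (RR (real m) u)"
        using Su Sv mN[OF m] by auto
      show "of_nat (N choose m) * (S_norm (s - real m) u * S_norm (real m) v + S_norm (s - real m) v * S_norm (real m) u) =
        ennreal (real (N choose m) * (RR (s - real m) u * RR (real m) v + RR (s - real m) v * RR (real m) u))"
        unfolding e using RRnn
        by (simp add: ennreal_of_nat_eq_real_of_nat ennreal_mult' mult_nonneg_nonneg)
    qed
    also have "\<dots> = ennreal Rb"
      unfolding Rb_def by (rule sum_ennreal) (intro mult_nonneg_nonneg add_nonneg_nonneg RRnn; simp)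
    finally show ?thesis using Rbnn by (simp add: ennreal_mult')
  qed
  finally show ?thesis by (simp add: N_def)
qed


end
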